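(* Let $\phi_0=0$. For each $a\in(-\tfrac12,\tfrac12)$ let $s_1(a)$ be the first positive zero of $f_a$. Then the image of $X_a:[-s_1(a),s_1(a)]\times\mathbb{S}^1\to\mathbb{S}^3$ is contained in the closed geodesic ball $B_{r(a)}(p_N)=\mathbb{S}^3\cap\{x^1\ge x_a(s_1(a))\}$, where $r(a)=\arccos x_a(s_1(a))$, and $r(a)<\tfrac\pi2$ if $a\in(-\tfrac12,0)$, $r(a)=\tfrac\pi2$ if $a=0$, $r(a)>\tfrac\pi2$ if $a\in(0,\tfrac12)$.
   Context: For $a\in(-\tfrac12,\tfrac12)$ and $\phi_0,t,s\in\mathbb{R}$ define $\psi(a,t)=\dfrac{(\frac14-a^2)^{1/2}}{(\frac12+a\cos 2t)^{1/2}(\frac12-a\cos 2t)}$, $\phi(a,s)=\phi_0+\int_0^s\psi(a,t)\,dt$, $x_a(s)=(\frac12-a\cos 2s)^{1/2}\cos\phi(a,s)$, $y_a(s)=(\frac12-a\cos 2s)^{1/2}\sin\phi(a,s)$, $z_a(s)=(\frac12+a\cos 2s)^{1/2}$, and $X_a:\mathbb{R}\times\mathbb{S}^1\to\mathbb{S}^3\subset\mathbb{R}^4$, $X_a(s,\theta)=(x_a(s),y_a(s),z_a(s)\cos\theta,z_a(s)\sin\theta)$. Define $f_a(s)=a\sin(2s)\sin\phi(a,s)+(\tfrac14-a^2)^{1/2}(\tfrac12+a\cos 2s)^{1/2}\cos\phi(a,s)$ (it has positive zeros). $p_N=(1,0,0,0)$ and $B_r(p_N)$ is the closed geodesic ball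 in $\mathbb{S}^3$ of radius $r$ centered at $p_N$, i.e. $\mathbb{S}^3\cap\{x^1\ge\cos r\}$. *)

theory Defs
  imports "HOL-Analysis.Analysis"
begin

definition psi :: "real \<Rightarrow> real \<Rightarrow> real" where
  "psi a t = sqrt (1/4 - a\<^sup>2) / (sqrt (1/2 + a * cos (2*t)) * (1/2 - a * cos (2*t)))"

definition phi :: "real \<Rightarrow> real \<Rightarrow> real" where
  "phi a s = (if 0 \<le> s then integral {0..s} (psi a) else - integral {s..0} (psi a))"

definition xa :: "real \<Rightarrow> real \<Rightarrow> real" where
  "xa a t = sqrt (1/2 - a * cos (2*t)) * cos (phi a t)"

definition ya :: "real \<Rightarrow> real \<Rightarrow> real" where
  "ya a t = sqrt (1/2 - a * cos (2*t)) * sin (phi a t)"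

definition za :: "real \<Rightarrow> real \<Rightarrow> real" where
  "za a t = sqrt (1/2 + a * cos (2*t))"

definition Xa :: "real \<Rightarrow> real \<Rightarrow> real \<Rightarrow> real^4" where
  "Xa a s \<theta> = vector [xa a s, ya a s, za a s * cos \<theta>, za a s * sin \<theta>]"

definition fa :: "real \<Rightarrow> real \<Rightarrow> real" where
  "fa a t = a * sin (2*t) * sin (phi a t)
           + sqrt (1/4 - a\<^sup>2) * sqrt (1/2 + a * cos (2*t)) * cos (phi a t)"

definition s1 :: "real \<Rightarrow> real" where
  "s1 a = (LEAST s. 0 < s \<and> fa a s = 0)"

definition S3 :: "(real^4) set" where
  "S3 = {p. norm p = 1}"

text \<open>closed geodesic ball of radius r about p_N = (1,0,0,0)\<close>
definition geoball :: "real \<Rightarrow> (real^4) set" where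
  "geoball r = S3 \<inter> {p. p $ 1 \<ge> cos r}"

end

theory Submission imports Defs begin

lemma vec4:
  fixes p q r t :: real
  shows "(vector [p,q,r,t] :: real^4) $ 1 = p" and "norm (vector [p,q,r,t] :: real^4) = sqrt (p^2+q^2+r^2+t^2)"
proof -
  show "(vector [p,q,r,t] :: real^4) $ 1 = p" unfolding vector_def by simp
  have e: "(vector [p,q,r,t] :: real^4) $ 2 = q" "(vector [p,q,r,t] :: real^4) $ 3 = r" "(vector [p,q,r,t] :: real^4) $ 4 = t"
    unfolding vector_def by simp_all
  show "norm (vector [p,q,r,t] :: real^4) = sqrt (p^2+q^2+r^2+t^2)"
    unfolding norm_eq_sqrt_inner inner_vec_def sum_4
    using e by (simp add: vector_def power2_eq_square)
qed

lemma basics: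
  fixes a t :: real
  assumes "-1/2 < a" "a < 1/2"
  shows "1/2 + a * cos (2*t) > 0" "1/2 - a * cos (2*t) > 0" "1/4 - a^2 > 0"
proof -
  have "\<bar>a * cos (2*t)\<bar> \<le> \<bar>a\<bar>" using abs_cos_le_one[of "2*t"]
    by (simp add: abs_mult mult_left_le)
  then show "1/2 + a * cos (2*t) > 0" "1/2 - a * cos (2*t) > 0" using assms by auto
  have "(1/2 - a)*(1/2+a) > 0" using assms by (intro mult_pos_pos) auto
  then show "1/4 - a^2 > 0" by (simp add: algebra_simps power2_eq_square)
qed

lemma psi_cont:
  assumes "-1/2 < a" "a < 1/2"
  shows "continuous_on S (psi a)"
proof -
  have "\<And>t. sqrt (1/2 + a * cos (2*t)) * (1/2 - a * cos (2*t)) \<noteq> 0"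
    using basics(1,2)[OF assms] by (metis mult_eq_0_iff real_sqrt_eq_zero_cancel_iff less_numeral_extra(3))
  then show ?thesis unfolding psi_def
    by (intro continuous_intros) auto
qed

lemma psi_pos:
  assumes "-1/2 < a" "a < 1/2"
  shows "psi a t > 0"
  using basics(1,2)[OF assms, of t] basics(3)[OF assms] unfolding psi_def by (intro divide_pos_pos mult_pos_pos) auto

lemma phi_deriv:
  assumes "-1/2 < a" "a < 1/2"
  shows "(phi a has_real_derivative psi a x) (at x)"
proof -
  define b where "b = min x 0 - 1"
  define B where "B = max x 0 + 1"
  have int: "\<And>u v. psi a integrable_on {u..v}"
    by (intro integrable_continuous_interval psi_cont[OF assms])
  have eq: "phi a s = integral {b..s} (psi a) - integral {b..0} (psi a)" if "s \<in> {b<..<B}" for s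
  proof (cases "0 \<le> s")
    case True
    have "integral {b..0} (psi a) + integral {0..s} (psi a) = integral {b..s} (psi a)"
      by (rule Henstock_Kurzweil_Integration.integral_combine) (use True b_def int in auto)
    then show ?thesis using True by (simp add: phi_def)
  next
    case False
    have "integral {b..s} (psi a) + integral {s..0} (psi a) = integral {b..0} (psi a)"
      by (rule Henstock_Kurzweil_Integration.integral_combine) (use False that b_def int in auto)
    then show ?thesis using False by (simp add: phi_def)
  qed
  have "((\<lambda>s. integral {b..s} (psi a)) has_real_derivative psi a x) (at x within {b..B})"
    by (rule integral_has_real_derivative) (use psi_cont[OF assms] b_def B_def in auto)
  then have "((\<lambda>s. integral {b..s} (psi a)) has_real_derivative psi a x) (at x within {b<..<B})"
    by (rule has_field_derivative_subset) auto
  then have "((\<lambda>s. integral {b..s} (psi a)) has_real_derivative psi a x) (at x)"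
    using at_within_open[of x "{b<..<B}"] b_def B_def by (simp add: min_def max_def)
  then have "((\<lambda>s. integral {b..s} (psi a) - integral {b..0} (psi a)) has_real_derivative psi a x) (at x)"
    by (auto intro!: derivative_eq_intros)
  then show ?thesis
    by (rule has_field_derivative_transform_within_open[where S="{b<..<B}"])
       (use b_def B_def eq in auto)
qed


context
  fixes a :: real
  assumes a1: "-1/2 < a" and a2: "a < 1/2"
begin

lemma bs: "1/2 + a*cos(2*t) > 0" "1/2 - a*cos(2*t) > 0" "1/4 - a^2 > 0"
  using basics[OF a1 a2] by auto

lemma phi0: "phi a 0 = 0" by (simp add: phi_def)

lemma phi_cont: "continuous_on S (phi a)"
  using phi_deriv[OF a1 a2] by (meson DERIV_isCont continuous_at_imp_continuous_on)

lemma phi_strict: "s < t \<Longrightarrow> phi a s < phi a t"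
  by (rule DERIV_pos_imp_increasing) (use phi_deriv[OF a1 a2] psi_pos[OF a1 a2] in auto)

lemma phi_odd: "phi a (-s) = - phi a s"
proof -
  have "\<forall>x. ((\<lambda>s. phi a (-s) + phi a s) has_real_derivative 0) (at x)"
  proof
    fix x
    have "((\<lambda>s. phi a (-s) + phi a s) has_real_derivative (psi a (-x) * -1 + psi a x)) (at x)"
      by ((rule derivative_eq_intros DERIV_chain2[OF phi_deriv[OF a1 a2]] refl)+, simp)
    moreover have "psi a (-x) = psi a x" by (simp add: psi_def)
    ultimately show "((\<lambda>s. phi a (-s) + phi a s) has_real_derivative 0) (at x)" by simp
  qed
  from DERIV_isconst_all[OF this, of s 0] show ?thesis by (simp add: phi0)
qed

lemma xa_even: "xa a (-s) = xa a s"
  by (simp add: xa_def phi_odd)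

lemma fa_cont: "continuous_on S (fa a)"
  unfolding fa_def by (intro continuous_intros phi_cont)

lemma fa0: "fa a 0 > 0"
  using bs(1,2)[of 0] bs(3) by (simp add: fa_def phi0)

lemma xa_bound: "\<bar>xa a t\<bar> \<le> 1"
proof -
  have R: "sqrt (1/2 - a * cos (2*t)) \<le> 1"
    using bs(1,2)[of t] bs(3) by (simp add: real_sqrt_le_1_iff)
  have "\<bar>xa a t\<bar> = sqrt (1/2 - a * cos (2*t)) * \<bar>cos (phi a t)\<bar>"
    unfolding xa_def using bs(1,2)[of t] by (simp add: abs_mult)
  also have "\<dots> \<le> 1 * 1"
    by (rule mult_mono) (use R abs_cos_le_one in auto)
  finally show ?thesis by simp
qed

lemma Xa_S3: "Xa a s th \<in> S3"
proof -
  have pp: "0 \<le> 1/2 - a * cos (2 * s)" "0 \<le> 1/2 + a * cos (2 * s)" using bs(1,2)[of s] by auto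
  have "(xa a s)^2 + (ya a s)^2 + (za a s * cos th)^2 + (za a s * sin th)^2
     = (1/2 - a * cos (2 * s)) * ((cos (phi a s))^2 + (sin (phi a s))^2)
       + (1/2 + a * cos (2 * s)) * ((cos th)^2 + (sin th)^2)"
    unfolding xa_def ya_def za_def power_mult_distrib real_sqrt_pow2[OF pp(1)] real_sqrt_pow2[OF pp(2)]
    by algebra
  also have "\<dots> = 1" by simp
  finally show ?thesis unfolding S3_def Xa_def by (simp add: vec4)
qed

lemma Xa_1: "Xa a s th $ 1 = xa a s"
  unfolding Xa_def by (simp add: vec4)


definition cc where "cc = sqrt (1/4 - a^2)"
definition kk where "kk = cc / (1/2 - a)"

lemma cc_pos: "cc > 0" unfolding cc_def using bs(3) by simp
lemma kk_pos: "kk > 0" unfolding kk_def using cc_pos a2 by simp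
lemma cc_sq: "cc^2 = (1/2 - a) * (1/2 + a)"
  unfolding cc_def using bs(3) by (simp add: algebra_simps power2_eq_square)
lemma kk_sq: "kk^2 = (1/2 + a) / (1/2 - a)"
proof -
  have "kk^2 = cc^2 / ((1/2 - a) * (1/2 - a))" unfolding kk_def by (simp add: power_divide power2_eq_square)
  also have "\<dots> = (1/2 + a) / (1/2 - a)" unfolding cc_sq using a2 by simp
  finally show ?thesis .
qed
lemma cc_kk: "cc * kk = 1/2 + a"
proof -
  have "cc * kk = cc^2 / (1/2 - a)" unfolding kk_def by (simp add: power2_eq_square)
  also have "\<dots> = 1/2 + a" unfolding cc_sq using a2 by simp
  finally show ?thesis .
qed

lemma psi_eq: "psi a t = cc / (sqrt (1/2 + a * cos (2*t)) * (1/2 - a * cos (2*t)))"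
  unfolding psi_def cc_def by simp

lemma arct_deriv:
  assumes "cos t > 0"
  shows "((\<lambda>s. arctan (kk * tan s)) has_real_derivative (cc / (1/2 - a * cos (2*t)))) (at t)"
proof -
  have d: "((\<lambda>s. arctan (kk * tan s)) has_real_derivative
      (inverse (1 + (kk * tan t)^2) * (kk * inverse ((cos t)^2)))) (at t)"
    using assms by (auto intro!: derivative_eq_intros)
  define C where "C = cos t"
  define S where "S = sin t"
  have CS: "C^2 + S^2 = 1" unfolding C_def S_def by simp
  have C0: "C > 0" using assms C_def by simp
  have c2: "cos (2*t) = C^2 - S^2" unfolding C_def S_def by (simp add: cos_double)
  have pos: "1/2 - a * cos (2*t) > 0" using bs(2) by simp
  have e1: "inverse (1 + (kk * tan t)^2) * (kk * inverse ((cos t)^2)) = kk / (C^2 + kk^2 * S^2)"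
    unfolding tan_def C_def[symmetric] S_def[symmetric] using C0
    by (simp add: field_simps power2_eq_square)
  have "kk * (1/2 - a * cos (2*t)) = cc * (C^2 + kk^2 * S^2)"
  proof -
    have "kk * (1/2 - a * cos (2*t)) = cc * (1/2 - a*(C^2 - S^2)) / (1/2 - a)"
      unfolding kk_def c2 by simp
    also have "\<dots> = cc * ((1/2 - a) * C^2 + (1/2 + a) * S^2) / (1/2 - a)"
      using CS by (simp add: algebra_simps) (metis (no_types, opaque_lifting) add_diff_cancel_left' diff_add_eq mult.commute mult_1 right_diff_distrib')
    also have "\<dots> = cc * (C^2 + kk^2 * S^2)"
      unfolding kk_sq using a2 by (simp add: field_simps)
    finally show ?thesis .
  qed
  moreover have "C^2 + kk^2 * S^2 > 0"
    using C0 by (intro add_pos_nonneg) auto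
  ultimately have "kk / (C^2 + kk^2 * S^2) = cc / (1/2 - a * cos (2*t))"
    using pos by (simp add: field_simps)
  with d e1 show ?thesis by simp
qed

definition DD where "DD s = phi a s - arctan (kk * tan s)"

lemma DD_deriv:
  assumes "-(pi/2) < t" "t < pi/2"
  shows "\<exists>y. (DD has_real_derivative y) (at t) \<and> y > 0"
proof -
  have ct: "cos t > 0" using cos_gt_zero_pi assms by auto
  have "(DD has_real_derivative (psi a t - cc / (1/2 - a * cos (2*t)))) (at t)"
    unfolding DD_def[abs_def] by (intro derivative_intros phi_deriv[OF a1 a2] arct_deriv ct)
  moreover have "psi a t > cc / (1/2 - a * cos (2*t))"
  proof -
    have z1: "sqrt (1/2 + a * cos (2*t)) < 1" using real_sqrt_less_mono[of "1/2 + a * cos (2*t)" 1] bs(2)[of t] by simp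
    have z0: "sqrt (1/2 + a * cos (2*t)) > 0" using bs(1)[of t] by simp
    have R: "1/2 - a * cos (2*t) > 0" using bs(2) by simp
    have "sqrt (1/2 + a * cos (2*t)) * (1/2 - a * cos (2*t)) < (1/2 - a * cos (2*t))"
      using z1 R by simp
    then show ?thesis unfolding psi_eq
      by (rule divide_strict_left_mono) (use cc_pos z0 R in auto)
  qed
  ultimately show ?thesis by (intro exI[of _ "psi a t - cc / (1/2 - a * cos (2*t))"]) auto
qed

lemma DD0: "DD 0 = 0" unfolding DD_def by (simp add: phi0)

lemma DD_mono: "0 \<le> s \<Longrightarrow> s < t \<Longrightarrow> t < pi/2 \<Longrightarrow> DD s < DD t"
  by (rule DERIV_pos_imp_increasing) (use DD_deriv in auto)

lemma phi_ge_arctan: "0 \<le> t \<Longrightarrow> t < pi/2 \<Longrightarrow> arctan (kk * tan t) \<le> phi a t"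
  using DD_mono[of 0 t] DD0 unfolding DD_def by (cases "t = 0") (auto simp: phi0)


lemma phi_pi2: "phi a (pi/2) > pi/2"
proof -
  define d where "d = DD (pi/4)"
  have d0: "d > 0" using DD_mono[of 0 "pi/4"] DD0 pi_gt_zero unfolding d_def by simp
  have ak: "arctan kk > 0" using arctan_less_iff[of 0 kk] kk_pos by simp
  have key: "phi a (pi/2) > d + arctan (kk * tan t)" if "pi/4 \<le> t" "t < pi/2" for t
  proof -
    have "DD (pi/4) \<le> DD t" proof (cases "t = pi/4")
      case False
      then show ?thesis using DD_mono[of "pi/4" t] that pi_gt_zero by auto
    next
      case True
      then show ?thesis by (simp only: True order_refl)
    qed
    then have "d + arctan (kk * tan t) \<le> phi a t" unfolding d_def DD_def[of t] by simp
    also have "\<dots> < phi a (pi/2)" by (rule phi_strict) (use that in simp)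
    finally show ?thesis .
  qed
  show ?thesis
  proof (cases "d \<ge> pi/2")
    case True
    have "phi a (pi/2) > d + arctan (kk * tan (pi/4))" by (rule key) (use pi_gt_zero in auto)
    then have "phi a (pi/2) > d + arctan kk" by (simp add: tan_45)
    then show ?thesis using True ak by linarith
  next
    case False
    define M where "M = max kk (tan (pi/2 - d)) + 1"
    define t where "t = arctan (M / kk)"
    have Mk: "M / kk > 1" unfolding M_def using kk_pos by (simp add: field_simps)
    have tt: "tan t = M / kk" unfolding t_def by (simp add: tan_arctan)
    have t1: "pi/4 \<le> t"
    proof -
      have "arctan 1 \<le> arctan (M / kk)" using Mk by (simp only: arctan_le_iff)
      then show ?thesis unfolding t_def arctan_one .
    qed
    have t2: "t < pi/2" unfolding t_def by (rule arctan_ubound)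
    have "kk * tan t = M" using tt kk_pos by simp
    then have "phi a (pi/2) > d + arctan M" using key[OF t1 t2] by simp
    moreover have "arctan M > pi/2 - d"
    proof -
      have "tan (pi/2 - d) < M" unfolding M_def by simp
      then have "arctan (tan (pi/2 - d)) < arctan M" by (simp add: arctan_less_iff)
      moreover have "arctan (tan (pi/2 - d)) = pi/2 - d"
        by (rule arctan_tan) (use False d0 in auto)
      ultimately show ?thesis by simp
    qed
    ultimately show ?thesis by simp
  qed
qed


lemma fa_eq: "fa a t = a * sin (2*t) * sin (phi a t) + cc * sqrt (1/2 + a * cos (2*t)) * cos (phi a t)"
  unfolding fa_def cc_def by simp

lemma fa_at_pi: "phi a s = pi \<Longrightarrow> fa a s < 0"
  unfolding fa_eq using cc_pos bs(1)[of s] by simp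

lemma fa_neg_exists: "\<exists>s0. 0 < s0 \<and> s0 \<le> pi/2 \<and> fa a s0 < 0"
proof (cases "phi a (pi/2) < pi")
  case True
  have "cos (phi a (pi/2)) < 0" using phi_pi2 True by (intro cos_lt_zero_pi) auto
  moreover have "sqrt (1/2 - a) > 0" using a2 by simp
  ultimately have "fa a (pi/2) < 0" unfolding fa_eq using cc_pos
    by (simp add: mult_pos_neg)
  then show ?thesis by (intro exI[of _ "pi/2"]) auto
next
  case False
  have "\<exists>x. 0 \<le> x \<and> x \<le> pi/2 \<and> phi a x = pi"
    by (rule IVT') (use False phi0 phi_cont in auto)
  then obtain x where x: "0 \<le> x" "x \<le> pi/2" "phi a x = pi" by blast
  have "x \<noteq> 0" using x phi0 by auto
  then show ?thesis using x fa_at_pi by (intro exI[of _ x]) auto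
qed

lemma s1_props:
  shows "0 < s1 a" "s1 a < pi/2" "fa a (s1 a) = 0"
    "\<And>y. 0 < y \<Longrightarrow> fa a y = 0 \<Longrightarrow> s1 a \<le> y"
proof -
  obtain s0 where s0: "0 < s0" "s0 \<le> pi/2" "fa a s0 < 0" using fa_neg_exists by blast
  define Z where "Z = {s \<in> {0..s0}. fa a s = 0}"
  have "\<exists>x. 0 \<le> x \<and> x \<le> s0 \<and> fa a x = 0"
    by (rule IVT2') (use s0 fa0 fa_cont in auto)
  then have Zne: "Z \<noteq> {}" unfolding Z_def by auto
  have Zc: "closed Z" unfolding Z_def
    by (rule continuous_closed_preimage_constant) (use fa_cont in auto)
  have Zb: "bdd_below Z" unfolding Z_def by (rule bdd_belowI[of _ 0]) auto
  define m where "m = Inf Z"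
  have mZ: "m \<in> Z" unfolding m_def by (rule closed_contains_Inf) (use Zne Zb Zc in auto)
  have m0: "0 < m"
  proof -
    have "m \<noteq> 0" using mZ fa0 unfolding Z_def by auto
    then show ?thesis using mZ unfolding Z_def by auto
  qed
  have mle: "m \<le> y" if "0 < y" "fa a y = 0" for y
  proof (cases "y \<le> s0")
    case True
    then have "y \<in> Z" unfolding Z_def using that by auto
    then show ?thesis unfolding m_def using Zb by (rule cInf_lower)
  next
    case False
    then show ?thesis using mZ unfolding Z_def by auto
  qed
  have s1m: "s1 a = m" unfolding s1_def
    by (rule Least_equality) (use m0 mZ mle in \<open>auto simp: Z_def\<close>)
  have "m \<noteq> s0" using mZ s0 unfolding Z_def by auto
  then have "m < s0" using mZ unfolding Z_def by auto
  then show "0 < s1 a" "s1 a < pi/2" "fa a (s1 a) = 0"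
    "\<And>y. 0 < y \<Longrightarrow> fa a y = 0 \<Longrightarrow> s1 a \<le> y"
    using s1m m0 mZ mle s0 unfolding Z_def by auto
qed

lemma fa_pos: "0 \<le> s \<Longrightarrow> s < s1 a \<Longrightarrow> fa a s > 0"
proof (rule ccontr)
  assume s: "0 \<le> s" "s < s1 a" and n: "\<not> fa a s > 0"
  have "s \<noteq> 0" using fa0 n by auto
  have "\<exists>x. 0 \<le> x \<and> x \<le> s \<and> fa a x = 0"
    by (rule IVT2') (use s n fa0 fa_cont in auto)
  then obtain x where x: "0 \<le> x" "x \<le> s" "fa a x = 0" by blast
  have "x \<noteq> 0" using x fa0 by auto
  then have "s1 a \<le> x" using s1_props(4)[of x] x by auto
  then show False using x s by auto
qed

lemma phi_lt_pi: "0 \<le> s \<Longrightarrow> s \<le> s1 a \<Longrightarrow> phi a s < pi"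
proof (rule ccontr)
  assume s: "0 \<le> s" "s \<le> s1 a" and n: "\<not> phi a s < pi"
  have "\<exists>x. 0 \<le> x \<and> x \<le> s \<and> phi a x = pi"
    by (rule IVT') (use s n phi0 phi_cont in auto)
  then obtain x where x: "0 \<le> x" "x \<le> s" "phi a x = pi" by blast
  have fx: "fa a x < 0" using fa_at_pi x by auto
  show False
  proof (cases "x < s1 a")
    case True then show False using fa_pos[of x] x fx by auto
  next
    case False then have "x = s1 a" using x s by auto
    then show False using fx s1_props(3) by auto
  qed
qed


lemma xa_deriv:
  "(xa a has_real_derivative
     (a * sin (2*t) / sqrt (1/2 - a * cos (2*t)) * cos (phi a t)
      - sqrt (1/2 - a * cos (2*t)) * sin (phi a t) * psi a t)) (at t)"
proof -
  have p: "1/2 - a * cos (2*t) > 0" using bs(2) by simp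
  have d1: "((\<lambda>t. 1/2 - a * cos (2*t)) has_real_derivative (a * (2 * sin (2*t)))) (at t)"
    by (auto intro!: derivative_eq_intros)
  have d2: "((\<lambda>t. sqrt (1/2 - a * cos (2*t))) has_real_derivative
      (inverse (sqrt (1/2 - a * cos (2*t))) / 2 * (a * (2 * sin (2*t))))) (at t)"
    by (rule DERIV_chain2[OF DERIV_real_sqrt[OF p] d1])
  have d3: "((\<lambda>t. cos (phi a t)) has_real_derivative (- sin (phi a t) * psi a t)) (at t)"
    by (rule DERIV_chain2[OF DERIV_cos phi_deriv[OF a1 a2]])
  have "(xa a has_real_derivative
     (inverse (sqrt (1/2 - a * cos (2*t))) / 2 * (a * (2 * sin (2*t)))) * cos (phi a t)
      + (- sin (phi a t) * psi a t) * sqrt (1/2 - a * cos (2*t))) (at t)"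
    unfolding xa_def[abs_def] by (rule DERIV_mult[OF d2 d3])
  then show ?thesis
    by (rule DERIV_cong) (simp add: field_simps)
qed


lemma h_nonpos:
  assumes t0: "0 \<le> t" and t1: "t \<le> s1 a"
  shows "a * sin (2*t) * sqrt (1/2 + a * cos (2*t)) * cos (phi a t) - cc * sin (phi a t) \<le> 0"
proof -
  define ph where "ph = phi a t"
  define z where "z = sqrt (1/2 + a * cos (2*t))"
  have tpi: "t < pi/2" using t1 s1_props(2) by simp
  have ph0: "0 \<le> ph" unfolding ph_def using phi_strict[of 0 t] phi0 t0 by (cases "t = 0") auto
  have phpi: "ph < pi" unfolding ph_def using phi_lt_pi t0 t1 by simp
  have S2: "sin (2*t) \<ge> 0" by (rule sin_ge_zero) (use t0 tpi in auto)
  have z0: "z > 0" unfolding z_def using bs(1)[of t] by simp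
  have z1: "z < 1" unfolding z_def using real_sqrt_less_mono[of "1/2 + a * cos (2*t)" 1] bs(2)[of t] by simp
  have f0: "fa a t \<ge> 0"
  proof (cases "t < s1 a")
    case True then show ?thesis using fa_pos t0 by (simp add: less_imp_le)
  next
    case False then show ?thesis using t1 s1_props(3) by simp
  qed
  have "a * sin (2*t) * z * cos ph - cc * sin ph \<le> 0"
  proof (cases "cos ph \<le> 0")
    case True
    have "ph \<noteq> 0" using True by auto
    then have sp: "sin ph > 0" using ph0 phpi by (intro sin_gt_zero) auto
    have id: "sin ph * (a * sin (2*t) * z * cos ph - cc * sin ph)
        = z * cos ph * fa a t - cc * ((sin ph)^2 + z^2 * (cos ph)^2)"
      unfolding fa_eq ph_def[symmetric] z_def[symmetric] power2_eq_square by algebra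
    have "z * cos ph * fa a t \<le> 0"
      by (rule mult_nonpos_nonneg) (use True z0 f0 mult_nonneg_nonpos[of z "cos ph"] in auto)
    moreover have "cc * ((sin ph)^2 + z^2 * (cos ph)^2) > 0"
      using cc_pos sp by (intro mult_pos_pos add_pos_nonneg) auto
    ultimately have "sin ph * (a * sin (2*t) * z * cos ph - cc * sin ph) < 0" using id by linarith
    then show ?thesis
    proof (rule contrapos_pp)
      assume "\<not> a * sin (2*t) * z * cos ph - cc * sin ph \<le> 0"
      then have "a * sin (2*t) * z * cos ph - cc * sin ph > 0" by simp
      with sp have "sin ph * (a * sin (2*t) * z * cos ph - cc * sin ph) > 0" by (rule mult_pos_pos)
      then show "\<not> sin ph * (a * sin (2*t) * z * cos ph - cc * sin ph) < 0" by simp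
    qed
  next
    case False
    then have cp: "cos ph > 0" by simp
    show ?thesis
    proof (cases "a \<le> 0")
      case True
      have "a * sin (2*t) * z * cos ph \<le> 0"
        by (intro mult_nonpos_nonneg) (use True S2 z0 cp in auto)
      moreover have "cc * sin ph \<ge> 0" using cc_pos sin_ge_zero[of ph] ph0 phpi by simp
      ultimately show ?thesis by linarith
    next
      case False
      then have ap: "a > 0" by simp
      have php2: "ph < pi/2"
      proof (rule ccontr)
        assume "\<not> ph < pi/2"
        then have "ph = pi/2 \<or> pi/2 < ph" by auto
        then have "cos ph \<le> 0"
        proof
          assume "ph = pi/2" then show ?thesis by (simp only: cos_pi_half order_refl)
        next
          assume "pi/2 < ph" then show ?thesis using cos_lt_zero_pi[of ph] phpi by simp
        qed
        then show False using cp by simp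
      qed
      have "arctan (kk * tan t) \<le> arctan (tan ph)"
        using phi_ge_arctan[OF t0 tpi] arctan_tan[of ph] ph0 php2 unfolding ph_def by simp
      then have T: "kk * tan t \<le> tan ph" by (simp add: arctan_le_iff)
      have ct: "cos t > 0" using t0 tpi by (intro cos_gt_zero_pi) auto
      have st: "sin t \<ge> 0" using t0 tpi by (intro sin_ge_zero) auto
      have "2 * a * z * (cos t)^2 \<le> 2 * a * 1 * 1"
        by (intro mult_mono) (use ap z0 z1 abs_cos_le_one[of t] in \<open>auto simp: abs_square_le_1\<close>)
      also have "\<dots> \<le> 1/2 + a" using a2 by simp
      finally have q: "2 * a * z * (cos t)^2 \<le> 1/2 + a" .
      have "a * sin (2*t) * z * cos t = sin t * (2 * a * z * (cos t)^2)"
        by (simp add: sin_double power2_eq_square)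
      also have "\<dots> \<le> sin t * (1/2 + a)" by (rule mult_left_mono[OF q st])
      finally have "a * sin (2*t) * z * cos t \<le> (1/2 + a) * sin t" by (simp only: mult.commute)
      then have "a * sin (2*t) * z \<le> (1/2 + a) * tan t"
        using ct unfolding tan_def by (simp add: field_simps)
      also have "\<dots> = cc * (kk * tan t)" using cc_kk by (simp add: mult.assoc[symmetric])
      also have "\<dots> \<le> cc * tan ph" using T cc_pos by simp
      finally have "a * sin (2*t) * z * cos ph \<le> cc * tan ph * cos ph"
        using cp by simp
      also have "cc * tan ph * cos ph = cc * sin ph" using cp unfolding tan_def by simp
      finally show ?thesis by simp
    qed
  qed
  then show ?thesis unfolding ph_def z_def .
qed

lemma xa_decr: "0 \<le> s \<Longrightarrow> s \<le> s1 a \<Longrightarrow> xa a (s1 a) \<le> xa a s"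
proof (rule DERIV_nonpos_imp_nonincreasing[where f="xa a"])
  fix t assume "0 \<le> s" "s \<le> t" "t \<le> s1 a"
  then have t0: "0 \<le> t" and t1: "t \<le> s1 a" by auto
  define u where "u = 1/2 - a * cos (2*t)"
  define z where "z = sqrt (1/2 + a * cos (2*t))"
  have u0: "u > 0" unfolding u_def using bs(2) by simp
  have z0: "z > 0" unfolding z_def using bs(1)[of t] by simp
  have eq: "a * sin (2*t) / sqrt u * cos (phi a t) - sqrt u * sin (phi a t) * psi a t
      = (a * sin (2*t) * z * cos (phi a t) - cc * sin (phi a t)) / (z * sqrt u)"
    unfolding psi_eq z_def[symmetric] u_def[symmetric] using u0 z0
    by (simp add: field_simps)
  have "(a * sin (2*t) * z * cos (phi a t) - cc * sin (phi a t)) / (z * sqrt u) \<le> 0"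
    by (rule divide_nonpos_pos) (use h_nonpos[OF t0 t1] z0 u0 z_def in auto)
  then show "\<exists>y. (xa a has_real_derivative y) (at t) \<and> y \<le> 0"
    using xa_deriv[of t] eq unfolding u_def by auto
qed


lemma sign_x1:
  shows "a < 0 \<Longrightarrow> xa a (s1 a) > 0" "a = 0 \<Longrightarrow> xa a (s1 a) = 0" "a > 0 \<Longrightarrow> xa a (s1 a) < 0"
proof -
  define s where "s = s1 a"
  define ph where "ph = phi a s"
  define z where "z = sqrt (1/2 + a * cos (2 * s))"
  define R where "R = sqrt (1/2 - a * cos (2 * s))"
  have s0: "0 < s" "s < pi/2" using s1_props unfolding s_def by auto
  have ph0: "0 < ph" unfolding ph_def using phi_strict[of 0 s] phi0 s0 by simp
  have phpi: "ph < pi" unfolding ph_def s_def using phi_lt_pi[of "s1 a"] s1_props(1) by simp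
  have S2: "sin (2 * s) > 0" by (rule sin_gt_zero) (use s0 in auto)
  have sp: "sin ph > 0" using ph0 phpi by (rule sin_gt_zero)
  have P: "sin (2 * s) * sin ph > 0" using S2 sp by simp
  have K: "cc * z > 0" unfolding z_def using cc_pos bs(1)[of s] by simp
  have R0: "R > 0" unfolding R_def using bs(2)[of s] by simp
  have eq: "a * (sin (2 * s) * sin ph) = - ((cc * z) * cos ph)"
    using s1_props(3) unfolding fa_eq s_def[symmetric] ph_def[symmetric] z_def[symmetric]
    by (simp add: algebra_simps)
  have x1: "xa a (s1 a) = R * cos ph" unfolding xa_def s_def[symmetric] R_def ph_def by simp
  show "a < 0 \<Longrightarrow> xa a (s1 a) > 0"
  proof -
    assume "a < 0"
    then have "a * (sin (2 * s) * sin ph) < 0" using P by (simp add: mult_neg_pos)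
    then have "(cc * z) * cos ph > 0" using eq by simp
    then have "cos ph > 0" using K by (simp add: zero_less_mult_iff)
    then show ?thesis using x1 R0 by simp
  qed
  show "a = 0 \<Longrightarrow> xa a (s1 a) = 0"
  proof -
    assume "a = 0"
    then have "(cc * z) * cos ph = 0" using eq by simp
    then have "cos ph = 0" using K by (metis mult_eq_0_iff less_irrefl)
    then show ?thesis using x1 by simp
  qed
  show "a > 0 \<Longrightarrow> xa a (s1 a) < 0"
  proof -
    assume "a > 0"
    then have "a * (sin (2 * s) * sin ph) > 0" using P by simp
    then have "(cc * z) * cos ph < 0" using eq by simp
    then have "cos ph < 0" using K mult_nonneg_nonneg[of "cc*z" "cos ph"] by linarith
    then show ?thesis using x1 R0 by (simp add: mult_pos_neg)
  qed
qed

end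


theorem mainTheorem7:
  fixes a :: real
  assumes "-1/2 < a" and "a < 1/2"
  shows "(\<lambda>(s, \<theta>). Xa a s \<theta>) ` ({- s1 a .. s1 a} \<times> UNIV) \<subseteq> geoball (arccos (xa a (s1 a)))
    \<and> geoball (arccos (xa a (s1 a))) = S3 \<inter> {p. p $ 1 \<ge> xa a (s1 a)}
    \<and> (a < 0 \<longrightarrow> arccos (xa a (s1 a)) < pi/2)
    \<and> (a = 0 \<longrightarrow> arccos (xa a (s1 a)) = pi/2)
    \<and> (0 < a \<longrightarrow> arccos (xa a (s1 a)) > pi/2)"
proof -
  define x1 where "x1 = xa a (s1 a)"
  have xb: "-1 \<le> x1" "x1 \<le> 1" using xa_bound[OF assms, of "s1 a"] unfolding x1_def by auto
  have gb: "geoball (arccos x1) = S3 \<inter> {p. p $ 1 \<ge> x1}"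
    unfolding geoball_def using xb by simp
  have sub: "(\<lambda>(s, \<theta>). Xa a s \<theta>) ` ({- s1 a .. s1 a} \<times> UNIV) \<subseteq> S3 \<inter> {p. p $ 1 \<ge> x1}"
  proof clarify
    fix s th assume s: "s \<in> {- s1 a .. s1 a}"
    have "x1 \<le> xa a s"
    proof (cases "0 \<le> s")
      case True then show ?thesis unfolding x1_def using xa_decr[OF assms, of s] s by auto
    next
      case False
      then have "x1 \<le> xa a (-s)" unfolding x1_def using xa_decr[OF assms, of "-s"] s by auto
      then show ?thesis using xa_even[OF assms, of s] by simp
    qed
    then show "Xa a s th \<in> S3 \<inter> {p. x1 \<le> p $ 1}"
      using Xa_S3[OF assms] Xa_1[OF assms] by simp
  qed
  have sg1: "a < 0 \<longrightarrow> arccos x1 < pi/2"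
  proof
    assume "a < 0"
    then have "0 < x1" using sign_x1(1)[OF assms] unfolding x1_def by simp
    then show "arccos x1 < pi/2" using arccos_less_arccos[of 0 x1] xb by simp
  qed
  have sg2: "a = 0 \<longrightarrow> arccos x1 = pi/2"
    using sign_x1(2)[OF assms] unfolding x1_def by simp
  have sg3: "0 < a \<longrightarrow> arccos x1 > pi/2"
  proof
    assume "0 < a"
    then have "x1 < 0" using sign_x1(3)[OF assms] unfolding x1_def by simp
    then show "arccos x1 > pi/2" using arccos_less_arccos[of x1 0] xb by simp
  qed
  show ?thesis using sub gb sg1 sg2 sg3 unfolding x1_def by simp
qed

end
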